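(* Let $X$ be a reflexive complex Banach space and let $A,B$ be positive self-adjoint operators from $X$ to $X^\ast$ with positive lower bound, such that $\operatorname{dom}J_A^\ast\cap\operatorname{dom}J_B^\ast$ is dense in $X$ (so that the form sum $A\dotplus B$ is defined). Let $E$ be a bounded linear operator on $X$ such that $E(\operatorname{dom}A)\subseteq\operatorname{dom}A$, $E(\operatorname{dom}B)\subseteq\operatorname{dom}B$, $E^\ast A\subseteq AE$ and $E^\ast B\subseteq BE$. Then $$E^\ast(A\dotplus B)\subseteq(A\dotplus B)E.$$
   Context: $X^\ast$ denotes the conjugate dual of $X$ (continuous conjugate-linear functionals on $X$); $X$ is identified with $X^{\ast\ast}$. For $v\in X^\ast$, $x\in X$ write $(v,x):=v(x)$ and $(x,v):=\overline{v(x)}$. An operator $A$ from $X$ to $X^\ast$ is positive if $(Ax,x)\ge0$ for all $x\in\operatorname{dom}A$, has positive lower bound if $(Ax,x)\ge\gamma\|x\|^2$ for some $\gamma>0$; its adjoint $A^\ast$ has domain $\{y\in X:x\mapsto(Ax,y)\text{ continuous on }\operatorname{dom}A\}$ and is determined by $(x,A^\ast y)=(Ax,y)$; $A$ is self-adjoint if $A=A^\ast$. For a bounded operator $E$ on $X$, $E^\ast$ is the bounded operator on $X^\ast$ with $(E^\ast v,x)=(v,Ex)$. For positive self-adjoint $A$: $H_A$ is the completion of $\operatorname{ran}A$ with respect to $[Ax,Ay]_A:=(Ax,y)$; $J_A$ is the operator from $H_A$ to $X^\ast$ with $\operatorname{dom}J_A=\operatorname{ran}A$, $J_A(Ax)=Ax$;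 $J_A^\ast$ is the operator from $X$ to $H_A$ with $\operatorname{dom}J_A^\ast=\{y\in X:h\mapsto(J_Ah,y)\text{ continuous on }\operatorname{dom}J_A\}$ and $[h,J_A^\ast y]_A=(J_Ah,y)$. Form sum: $H_{A,B}:=\operatorname{dom}J_A^\ast\cap\operatorname{dom}J_B^\ast$ with inner product $t(x,y)=[J_A^\ast x,J_A^\ast y]_A+[J_B^\ast x,J_B^\ast y]_B$ is a Hilbert space; $A\dotplus B$ has domain $\{x\in H_{A,B}: y\mapsto t(x,y)\text{ continuous on }H_{A,B}\text{ in the norm of }X\}$, and $(A\dotplus B)x$ is the $z\in X^\ast$ with $(z,y)=t(x,y)$ for all $y\in H_{A,B}$. *)

theory Defs
  imports "HOL-Analysis.Analysis"
begin

text \<open>HOL-Analysis has no class of complex vector spaces, so we add one: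
  a real normed vector space with a compatible complex scalar multiplication.\<close>

class cnormed_vector = real_normed_vector +
  fixes scaleC :: "complex \<Rightarrow> 'a \<Rightarrow> 'a"
  assumes scaleC_add_right: "scaleC a (x + y) = scaleC a x + scaleC a y"
    and scaleC_add_left: "scaleC (a + b) x = scaleC a x + scaleC b x"
    and scaleC_scaleC: "scaleC a (scaleC b x) = scaleC (a * b) x"
    and scaleC_one: "scaleC 1 x = x"
    and scaleR_scaleC: "scaleR r x = scaleC (complex_of_real r) x"
    and norm_scaleC: "norm (scaleC a x) = cmod a * norm x"

instantiation complex :: cnormed_vector
begin
definition scaleC_complex :: "complex \<Rightarrow> complex \<Rightarrow> complex" where
  "scaleC_complex a x = a * x"
instance
  by standard (auto simp: scaleC_complex_def algebra_simps norm_mult scaleR_conv_of_real)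
end

text \<open>X* : continuous conjugate-linear functionals; (v,x) = v x.\<close>
definition cdual :: "('a::cnormed_vector \<Rightarrow> complex) set" where
  "cdual = {v. (\<forall>x y. v (x + y) = v x + v y) \<and> (\<forall>c x. v (scaleC c x) = cnj c * v x)
              \<and> (\<exists>K. \<forall>x. cmod (v x) \<le> K * norm x)}"

definition dnorm :: "('a::cnormed_vector \<Rightarrow> complex) \<Rightarrow> real" where
  "dnorm v = (SUP x\<in>{x::'a. norm x \<le> 1}. cmod (v x))"

text \<open>Reflexivity: every continuous conjugate-linear functional on X* is of the form
  v \<mapsto> (x,v) = conj (v x) for some x in X (canonical map X \<rightarrow> X** is onto).\<close>
definition reflexive_space :: "'a::cnormed_vector itself \<Rightarrow> bool" where
  "reflexive_space (_::'a itself) \<longleftrightarrow>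
    (\<forall>\<phi>::('a \<Rightarrow> complex) \<Rightarrow> complex.
       ((\<forall>u\<in>cdual. \<forall>v\<in>cdual. \<phi> (\<lambda>x. u x + v x) = \<phi> u + \<phi> v)
        \<and> (\<forall>c. \<forall>v\<in>cdual. \<phi> (\<lambda>x. c * v x) = cnj c * \<phi> v)
        \<and> (\<exists>K. \<forall>v\<in>cdual. cmod (\<phi> v) \<le> K * dnorm v))
       \<longrightarrow> (\<exists>x::'a. \<forall>v\<in>cdual. \<phi> v = cnj (v x)))"

text \<open>An operator from X to X* is given by its domain D (a linear subspace) and a
  map A, linear on D with values in X*.\<close>
definition is_op :: "'a::cnormed_vector set \<Rightarrow> ('a \<Rightarrow> 'a \<Rightarrow> complex) \<Rightarrow> bool" where
  "is_op D A \<longleftrightarrow> 0 \<in> D \<and> (\<forall>x\<in>D. \<forall>y\<in>D. x + y \<in> D) \<and> (\<forall>c. \<forall>x\<in>D. scaleC c x \<in> D)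
     \<and> (\<forall>x\<in>D. A x \<in> cdual)
     \<and> (\<forall>x\<in>D. \<forall>y\<in>D. A (x + y) = (\<lambda>z. A x z + A y z))
     \<and> (\<forall>c. \<forall>x\<in>D. A (scaleC c x) = (\<lambda>z. c * A x z))"

definition pos_op :: "'a::cnormed_vector set \<Rightarrow> ('a \<Rightarrow> 'a \<Rightarrow> complex) \<Rightarrow> bool" where
  "pos_op D A \<longleftrightarrow> (\<forall>x\<in>D. A x x \<in> \<real> \<and> 0 \<le> Re (A x x))"

definition pos_lower_bound :: "'a::cnormed_vector set \<Rightarrow> ('a \<Rightarrow> 'a \<Rightarrow> complex) \<Rightarrow> bool" where
  "pos_lower_bound D A \<longleftrightarrow> (\<exists>\<gamma>>0. \<forall>x\<in>D. A x x \<in> \<real> \<and> \<gamma> * (norm x)\<^sup>2 \<le> Re (A x x))"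

text \<open>Graph of the adjoint A*: y in dom A* iff x \<mapsto> (Ax,y) is continuous on dom A,
  and A* y = z with (x,z) = conj (z x) = (Ax,y) for all x in dom A.\<close>
definition adjoint_graph :: "'a::cnormed_vector set \<Rightarrow> ('a \<Rightarrow> 'a \<Rightarrow> complex) \<Rightarrow> ('a \<times> ('a \<Rightarrow> complex)) set" where
  "adjoint_graph D A = {(y, z). (\<exists>K. \<forall>x\<in>D. cmod (A x y) \<le> K * norm x) \<and> z \<in> cdual
                          \<and> (\<forall>x\<in>D. cnj (z x) = A x y)}"

definition self_adjoint_op :: "'a::cnormed_vector set \<Rightarrow> ('a \<Rightarrow> 'a \<Rightarrow> complex) \<Rightarrow> bool" where
  "self_adjoint_op D A \<longleftrightarrow> adjoint_graph D A = {(x, A x) | x. x \<in> D}"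

definition is_ip :: "('h::cnormed_vector \<Rightarrow> 'h \<Rightarrow> complex) \<Rightarrow> bool" where
  "is_ip ip \<longleftrightarrow> (\<forall>u v w. ip (u + v) w = ip u w + ip v w)
     \<and> (\<forall>c u v. ip (scaleC c u) v = c * ip u v)
     \<and> (\<forall>u v. ip u v = cnj (ip v u))
     \<and> (\<forall>u. ip u u = complex_of_real ((norm u)\<^sup>2))"

text \<open>(H, ip, \<iota>) is a completion of ran A w.r.t. [Ax,Ay]_A = (Ax,y): H is a Hilbert space
  (completeness comes from the type class of 'h), \<iota> is a linear embedding of ran A
  preserving the inner product, with dense image.\<close>
definition energy_completion ::
  "'a::cnormed_vector set \<Rightarrow> ('a \<Rightarrow> 'a \<Rightarrow> complex) \<Rightarrow> ('h::{cnormed_vector,banach} \<Rightarrow> 'h \<Rightarrow> complex)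
     \<Rightarrow> (('a \<Rightarrow> complex) \<Rightarrow> 'h) \<Rightarrow> bool" where
  "energy_completion D A ip \<iota> \<longleftrightarrow> is_ip ip
     \<and> (\<forall>f\<in>A ` D. \<forall>g\<in>A ` D. \<iota> (\<lambda>z. f z + g z) = \<iota> f + \<iota> g)
     \<and> (\<forall>c. \<forall>f\<in>A ` D. \<iota> (\<lambda>z. c * f z) = scaleC c (\<iota> f))
     \<and> (\<forall>x\<in>D. \<forall>y\<in>D. ip (\<iota> (A x)) (\<iota> (A y)) = A x y)
     \<and> closure (\<iota> ` A ` D) = UNIV"

text \<open>dom J_A* : y such that h \<mapsto> (J_A h, y) is continuous on dom J_A = ran A (in H_A).\<close>
definition Jstar_dom ::
  "'a::cnormed_vector set \<Rightarrow> ('a \<Rightarrow> 'a \<Rightarrow> complex) \<Rightarrow> (('a \<Rightarrow> complex) \<Rightarrow> 'h::real_normed_vector) \<Rightarrow> 'a set" where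
  "Jstar_dom D A \<iota> = {y. \<exists>K. \<forall>x\<in>D. cmod (A x y) \<le> K * norm (\<iota> (A x))}"

text \<open>J_A* y : the element w of H_A with [h, w]_A = (J_A h, y) for all h in ran A.\<close>
definition Jstar ::
  "'a::cnormed_vector set \<Rightarrow> ('a \<Rightarrow> 'a \<Rightarrow> complex) \<Rightarrow> ('h \<Rightarrow> 'h \<Rightarrow> complex)
     \<Rightarrow> (('a \<Rightarrow> complex) \<Rightarrow> 'h) \<Rightarrow> 'a \<Rightarrow> 'h" where
  "Jstar D A ip \<iota> y = (THE w. \<forall>x\<in>D. ip (\<iota> (A x)) w = A x y)"

definition form_space where
  "form_space DA A \<iota>A DB B \<iota>B = Jstar_dom DA A \<iota>A \<inter> Jstar_dom DB B \<iota>B"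

definition form_t where
  "form_t DA A ipA \<iota>A DB B ipB \<iota>B x y =
     ipA (Jstar DA A ipA \<iota>A x) (Jstar DA A ipA \<iota>A y) + ipB (Jstar DB B ipB \<iota>B x) (Jstar DB B ipB \<iota>B y)"

definition formsum_dom where
  "formsum_dom DA A ipA \<iota>A DB B ipB \<iota>B =
     {x \<in> form_space DA A \<iota>A DB B \<iota>B. \<exists>K. \<forall>y \<in> form_space DA A \<iota>A DB B \<iota>B.
        cmod (form_t DA A ipA \<iota>A DB B ipB \<iota>B x y) \<le> K * norm y}"

definition formsum where
  "formsum DA A ipA \<iota>A DB B ipB \<iota>B x =
     (THE z. z \<in> cdual \<and> (\<forall>y \<in> form_space DA A \<iota>A DB B \<iota>B. z y = form_t DA A ipA \<iota>A DB B ipB \<iota>B x y))"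

definition dual_op :: "('a \<Rightarrow> 'a) \<Rightarrow> ('a \<Rightarrow> complex) \<Rightarrow> ('a \<Rightarrow> complex)" where
  "dual_op E v = (\<lambda>x. v (E x))"

end

theory Submission
  imports Defs
begin


lemma scaleC_zero_right[simp]: "scaleC c (0::'a::cnormed_vector) = 0"
  using scaleC_add_right[of c 0 0] by simp
lemma scaleC_zero_left[simp]: "scaleC 0 (x::'a::cnormed_vector) = 0"
  using scaleC_add_left[of 0 0 x] by simp
lemma scaleC_minus_one: "scaleC (-1) (x::'a::cnormed_vector) = - x"
  using scaleR_scaleC[of "-1" x] by simp
lemma scaleC_minus_right: "scaleC c (- x::'a::cnormed_vector) = - scaleC c x"
proof -
  have "scaleC c (-x) + scaleC c x = 0" using scaleC_add_right[of c "-x" x] by simp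
  then show ?thesis by (simp add: eq_neg_iff_add_eq_0)
qed
lemma scaleC_diff_right: "scaleC c (x - y::'a::cnormed_vector) = scaleC c x - scaleC c y"
  by (metis diff_conv_add_uminus scaleC_add_right scaleC_minus_right)
lemma scaleC_of_real: "scaleC (complex_of_real r) (x::'a::cnormed_vector) = scaleR r x"
  by (simp add: scaleR_scaleC)
lemma scaleC_scaleR_comm: "scaleC c (scaleR r (x::'a::cnormed_vector)) = scaleR r (scaleC c x)"
  by (simp add: scaleR_scaleC scaleC_scaleC mult.commute)

lemma bounded_linear_scaleC: "bounded_linear (\<lambda>x::'a::cnormed_vector. scaleC c x)"
  apply (rule bounded_linear_intro[where K="cmod c"])
  by (auto simp: scaleC_add_right scaleC_scaleR_comm norm_scaleC)

locale ipsp =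
  fixes ip :: "'h::{cnormed_vector,banach} \<Rightarrow> 'h \<Rightarrow> complex"
  assumes isip: "is_ip ip"
begin

lemma add_l: "ip (u + v) w = ip u w + ip v w" using isip unfolding is_ip_def by blast
lemma scale_l: "ip (scaleC c u) v = c * ip u v" using isip unfolding is_ip_def by blast
lemma sym: "ip u v = cnj (ip v u)" using isip unfolding is_ip_def by blast
lemma self: "ip u u = complex_of_real ((norm u)\<^sup>2)" using isip unfolding is_ip_def by blast

lemma add_r: "ip w (u + v) = ip w u + ip w v"
proof -
  have "ip w (u + v) = cnj (ip (u+v) w)" by (rule sym)
  also have "\<dots> = cnj (ip u w) + cnj (ip v w)" by (simp only: add_l complex_cnj_add)
  also have "cnj (ip u w) = ip w u" by (rule sym[symmetric])
  also have "cnj (ip v w) = ip w v" by (rule sym[symmetric])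
  finally show ?thesis .
qed
lemma scale_r: "ip u (scaleC c v) = cnj c * ip u v"
proof -
  have "ip u (scaleC c v) = cnj (ip (scaleC c v) u)" by (rule sym)
  also have "\<dots> = cnj c * cnj (ip v u)" by (simp only: scale_l complex_cnj_mult)
  also have "cnj (ip v u) = ip u v" by (rule sym[symmetric])
  finally show ?thesis .
qed
lemma zero_l[simp]: "ip 0 v = 0"
proof -
  have "ip 0 v = ip (scaleC 0 0) v" by simp
  also have "\<dots> = 0" by (simp only: scale_l mult_zero_left)
  finally show ?thesis .
qed
lemma zero_r[simp]: "ip v 0 = 0"
proof -
  have "ip v 0 = cnj (ip 0 v)" by (rule sym)
  then show ?thesis by simp
qed
lemma minus_l: "ip (- u) v = - ip u v"
proof -
  have "ip (- u) v = ip (scaleC (-1) u) v" by (simp only: scaleC_minus_one)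
  also have "\<dots> = - ip u v" by (simp only: scale_l mult_minus1)
  finally show ?thesis .
qed
lemma minus_r: "ip v (- u) = - ip v u"
proof -
  have "ip v (- u) = cnj (ip (-u) v)" by (rule sym)
  also have "\<dots> = - cnj (ip u v)" by (simp only: minus_l complex_cnj_minus)
  also have "cnj (ip u v) = ip v u" by (rule sym[symmetric])
  finally show ?thesis .
qed
lemma diff_l: "ip (u - v) w = ip u w - ip v w" by (simp only: diff_conv_add_uminus add_l minus_l)
lemma diff_r: "ip w (u - v) = ip w u - ip w v" by (simp only: diff_conv_add_uminus add_r minus_r)
lemma scaleR_l: "ip (scaleR r u) v = r * ip u v"
  by (simp only: scaleC_of_real[symmetric] scale_l)
lemma scaleR_r: "ip u (scaleR r v) = r * ip u v"
  by (simp only: scaleC_of_real[symmetric] scale_r complex_cnj_complex_of_real)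

lemma Re_self: "Re (ip u u) = (norm u)\<^sup>2" by (simp add: self)

lemma norm_add_sq: "(norm (a + b))\<^sup>2 = (norm a)\<^sup>2 + (norm b)\<^sup>2 + 2 * Re (ip a b)"
proof -
  have "(norm (a + b))\<^sup>2 = Re (ip (a+b) (a+b))" by (simp add: Re_self)
  also have "\<dots> = Re (ip a a) + Re (ip b b) + Re (ip a b) + Re (ip b a)"
    by (simp add: add_l add_r)
  also have "Re (ip b a) = Re (ip a b)" by (subst sym[of b a]) simp
  finally show ?thesis by (simp add: Re_self)
qed

lemma CS_Re: "Re (ip a b) \<le> norm a * norm b"
proof (cases "b = 0")
  case True then show ?thesis by simp
next
  case False
  then have nb: "norm b > 0" by simp
  define p where "p = Re (ip a b)"
  have all: "\<forall>t. 0 \<le> (norm a)\<^sup>2 + t\<^sup>2 * (norm b)\<^sup>2 + 2 * t * p"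
  proof
    fix t
    have "(norm (a + scaleR t b))\<^sup>2 = (norm a)\<^sup>2 + t\<^sup>2 * (norm b)\<^sup>2 + 2 * t * p"
      by (simp add: norm_add_sq scaleR_r p_def power_mult_distrib)
    then show "0 \<le> (norm a)\<^sup>2 + t\<^sup>2 * (norm b)\<^sup>2 + 2 * t * p" using zero_le_power2[of "norm (a + scaleR t b)"] by linarith
  qed
  have "0 \<le> (norm a)\<^sup>2 + (-p/(norm b)\<^sup>2)\<^sup>2 * (norm b)\<^sup>2 + 2*(-p/(norm b)\<^sup>2)*p"
    using spec[OF all, of "-p/(norm b)\<^sup>2"] .
  also have "\<dots> = (norm a)\<^sup>2 - p\<^sup>2/(norm b)\<^sup>2" using nb by (simp add: field_simps power2_eq_square)
  finally have "p\<^sup>2 / (norm b)\<^sup>2 \<le> (norm a)\<^sup>2" by simp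
  then have "p\<^sup>2 \<le> (norm a * norm b)\<^sup>2" using nb by (simp add: field_simps power_mult_distrib)
  then show ?thesis unfolding p_def
    by (rule power2_le_imp_le) simp
qed

lemma CS: "cmod (ip a b) \<le> norm a * norm b"
proof (cases "ip a b = 0")
  case True then show ?thesis by simp
next
  case False
  define c where "c = cnj (ip a b) / cmod (ip a b)"
  have cm: "cmod c = 1" using False by (simp add: c_def norm_divide)
  have "ip (scaleC c a) b = cmod (ip a b)"
  proof -
    have "cnj (ip a b) * ip a b = (cmod (ip a b))\<^sup>2" using complex_norm_square[of "ip a b"] by (simp add: mult.commute)
    then show ?thesis using False by (simp add: scale_l c_def power2_eq_square field_simps)
  qed
  then have "cmod (ip a b) = Re (ip (scaleC c a) b)" by simp
  also have "\<dots> \<le> norm (scaleC c a) * norm b" by (rule CS_Re)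
  finally show ?thesis by (simp add: norm_scaleC cm)
qed

lemma bl_l: "bounded_linear (\<lambda>h. ip h d)"
  apply (rule bounded_linear_intro[where K="norm d"])
  using CS by (auto simp: add_l scaleR_l scaleR_conv_of_real)

lemma bl_r: "bounded_linear (\<lambda>h. ip d h)"
  apply (rule bounded_linear_intro[where K="norm d"])
  apply (auto simp: add_r scaleR_r scaleR_conv_of_real)
  using CS by (metis mult.commute)

lemma dense_unique:
  assumes "closure S = UNIV" "\<forall>h\<in>S. ip h w1 = ip h w2"
  shows "w1 = w2"
proof -
  let ?d = "w1 - w2"
  have "S \<subseteq> {h. ip h ?d = 0}" using assms(2) by (auto simp: diff_r)
  moreover have "closed {h. ip h ?d = 0}"
    by (intro closed_Collect_eq continuous_on_const linear_continuous_on bl_l)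
  ultimately have "closure S \<subseteq> {h. ip h ?d = 0}" by (rule closure_minimal)
  then have "ip ?d ?d = 0" using assms(1) by auto
  then show ?thesis by (simp add: self)
qed

end


lemma quad_zero:
  fixes d :: complex and G :: real
  assumes G: "0 \<le> G" and H: "\<And>t. 2 * Re (t * d) \<le> (cmod t)\<^sup>2 * G"
  shows "d = 0"
proof (rule ccontr)
  assume nz: "d \<noteq> 0"
  define s where "s = 1 / (G + 1)"
  have s0: "s > 0" using G by (simp add: s_def)
  define t where "t = complex_of_real s * cnj d"
  have td: "t * d = complex_of_real (s * (cmod d)\<^sup>2)"
    unfolding t_def using complex_norm_square[of d] by (simp add: mult.commute mult.left_commute)
  have ct: "cmod t = s * cmod d" using s0 by (simp add: t_def norm_mult)
  from H[of t] have "2 * (s * (cmod d)\<^sup>2) \<le> (s * cmod d)\<^sup>2 * G" by (simp add: td ct)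
  then have "2 * (s * (cmod d)\<^sup>2) \<le> (s * (cmod d)\<^sup>2) * (s * G)" by (simp add: power2_eq_square mult_ac)
  moreover have "s * (cmod d)\<^sup>2 > 0" using s0 nz by simp
  ultimately have "2 \<le> s * G" by (metis mult.commute mult_le_cancel_left_pos)
  moreover have "s * G < 1" using G by (simp add: s_def)
  ultimately show False by simp
qed

lemma seq_growth:
  fixes e :: "nat \<Rightarrow> real"
  assumes e0: "\<And>k. 0 \<le> e k"
    and cs: "\<And>k. (e (Suc k))\<^sup>2 \<le> e k * e (Suc (Suc k))"
    and gr: "\<And>k. (e k)\<^sup>2 \<le> L * N ^ (2 * k)"
    and N: "N > 0"
  shows "e 1 \<le> N * e 0"
proof (rule ccontr)
  assume "\<not> e 1 \<le> N * e 0"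
  then have big: "e 1 > N * e 0" by simp
  have pos0: "e 0 > 0"
  proof (rule ccontr)
    assume "\<not> e 0 > 0"
    then have "e 0 = 0" using e0[of 0] by simp
    then have "(e 1)\<^sup>2 \<le> 0" using cs[of 0] by simp
    then have "e 1 = 0" by simp
    with big \<open>e 0 = 0\<close> show False by simp
  qed
  define \<rho> where "\<rho> = e 1 / e 0"
  have rhoN: "\<rho> > N" using big pos0 by (simp add: \<rho>_def field_simps)
  have step: "e (Suc k) \<ge> \<rho> * e k \<and> e k > 0" for k
  proof (induction k)
    case 0 then show ?case using pos0 by (simp add: \<rho>_def)
  next
    case (Suc k)
    then have ek: "e k > 0" and r: "e (Suc k) \<ge> \<rho> * e k" by auto
    have rpos: "\<rho> > 0" using rhoN N by simp
    have ek1: "e (Suc k) > 0" using r ek rpos by (meson mult_pos_pos order_less_le_trans)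
    have "e k * (\<rho> * e (Suc k)) \<le> e (Suc k) * e (Suc k)"
      using r ek1 by (simp add: mult.commute mult.left_commute mult_right_mono)
    also have "\<dots> \<le> e k * e (Suc (Suc k))" using cs[of k] by (simp add: power2_eq_square)
    finally have "\<rho> * e (Suc k) \<le> e (Suc (Suc k))" using ek by simp
    then show ?case using ek1 by simp
  qed
  have pw: "e k \<ge> \<rho> ^ k * e 0" for k
  proof (induction k)
    case 0 then show ?case by simp
  next
    case (Suc k)
    have rpos: "\<rho> > 0" using rhoN N by simp
    have "\<rho> ^ Suc k * e 0 = \<rho> * (\<rho> ^ k * e 0)" by simp
    also have "\<dots> \<le> \<rho> * e k" using Suc rpos by simp
    also have "\<dots> \<le> e (Suc k)" using step[of k] by simp
    finally show ?case .
  qed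
  define q where "q = (\<rho> / N)\<^sup>2"
  have q1: "q > 1"
  proof -
    have "\<rho> / N > 1" using rhoN N by simp
    then show ?thesis unfolding q_def using one_less_power[of "\<rho>/N" 2] by simp
  qed
  obtain n where n: "L / (e 0)\<^sup>2 < q ^ n" using real_arch_pow[OF q1] by blast
  have "(\<rho> ^ n * e 0)\<^sup>2 \<le> (e n)\<^sup>2"
    using pw[of n] pos0 \<open>\<rho> > N\<close> N by (intro power_mono) auto
  also have "\<dots> \<le> L * N ^ (2 * n)" by (rule gr)
  finally have "(\<rho> ^ n)\<^sup>2 * (e 0)\<^sup>2 \<le> L * N ^ (2 * n)" by (simp add: power_mult_distrib)
  moreover have "(\<rho> ^ n)\<^sup>2 = q ^ n * N ^ (2 * n)"
  proof -
    have "q ^ n * N ^ (2 * n) = (\<rho> / N) ^ (2 * n) * N ^ (2 * n)" by (simp add: q_def power_mult)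
    also have "\<dots> = \<rho> ^ (2 * n)" using N by (simp add: power_divide)
    also have "\<dots> = (\<rho> ^ n)\<^sup>2" by (metis power_mult mult.commute)
    finally show ?thesis by simp
  qed
  ultimately have "q ^ n * (e 0)\<^sup>2 * N ^ (2 * n) \<le> L * N ^ (2 * n)" by (simp add: mult_ac)
  then have "q ^ n * (e 0)\<^sup>2 \<le> L" using N by simp
  then have "q ^ n \<le> L / (e 0)\<^sup>2" using pos0 by (simp add: field_simps)
  with n show False by simp
qed

section \<open>Conjugate-linear functionals\<close>

lemma cdual_add: "v \<in> cdual \<Longrightarrow> v (x + y) = v x + v y" unfolding cdual_def by blast
lemma cdual_scale: "v \<in> cdual \<Longrightarrow> v (scaleC c x) = cnj c * v x" unfolding cdual_def by blast
lemma cdual_bound: "v \<in> cdual \<Longrightarrow> \<exists>K. \<forall>x. cmod (v x) \<le> K * norm x" unfolding cdual_def by blast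
lemma cdual_zero: "v \<in> cdual \<Longrightarrow> v 0 = 0" using cdual_add[of v 0 0] by simp

lemma cdual_bl: assumes "v \<in> cdual" shows "bounded_linear v"
proof -
  obtain K where K: "\<forall>x. cmod (v x) \<le> K * norm x" using cdual_bound[OF assms] by blast
  show ?thesis
    apply (rule bounded_linear_intro[where K=K])
    using assms K by (auto simp: cdual_add scaleR_scaleC cdual_scale scaleC_complex_def mult.commute)
qed

lemma cdualI:
  assumes "\<And>x y. v (x + y) = v x + v y" "\<And>c x. v (scaleC c x) = cnj c * v x" "\<And>x. cmod (v x) \<le> K * norm x"
  shows "v \<in> cdual"
  unfolding cdual_def using assms by blast

lemma cdual_unique:
  fixes z1 z2 :: "'a::cnormed_vector \<Rightarrow> complex"
  assumes "z1 \<in> cdual" "z2 \<in> cdual" "closure S = UNIV" "\<forall>y\<in>S. z1 y = z2 y"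
  shows "z1 = z2"
proof -
  have "closed {y. z1 y = z2 y}"
    by (intro closed_Collect_eq linear_continuous_on cdual_bl assms)
  moreover have "S \<subseteq> {y. z1 y = z2 y}" using assms(4) by auto
  ultimately have "closure S \<subseteq> {y. z1 y = z2 y}" by (metis closure_minimal)
  then show ?thesis using assms(3) by auto
qed

lemma extension:
  fixes S :: "'a::{cnormed_vector,banach} set" and f :: "'a \<Rightarrow> complex"
  assumes S0: "0 \<in> S" and Sadd: "\<And>a b. a \<in> S \<Longrightarrow> b \<in> S \<Longrightarrow> a + b \<in> S"
    and Ssc: "\<And>c a. a \<in> S \<Longrightarrow> scaleC c a \<in> S"
    and fadd: "\<And>a b. a \<in> S \<Longrightarrow> b \<in> S \<Longrightarrow> f (a + b) = f a + f b"
    and fsc: "\<And>c a. a \<in> S \<Longrightarrow> f (scaleC c a) = cnj c * f a"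
    and fb: "\<And>a. a \<in> S \<Longrightarrow> cmod (f a) \<le> K * norm a"
    and dense: "closure S = UNIV"
  shows "\<exists>z\<in>cdual. \<forall>y\<in>S. z y = f y"
proof -
  have Sdiff: "a - b \<in> S" if "a \<in> S" "b \<in> S" for a b
    using Sadd[OF that(1) Ssc[OF that(2), of "-1"]] by (simp add: scaleC_minus_one)
  have fdiff: "f (a - b) = f a - f b" if "a \<in> S" "b \<in> S" for a b
    using fadd[OF that(1) Ssc[OF that(2), of "-1"]] fsc[OF that(2), of "-1"] by (simp add: scaleC_minus_one)
  define K' where "K' = max K 0 + 1"
  have K'pos: "K' > 0" by (simp add: K'_def)
  have fb': "cmod (f a) \<le> K' * norm a" if "a \<in> S" for a
  proof -
    have "K * norm a \<le> K' * norm a" by (intro mult_right_mono) (auto simp: K'_def)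
    then show ?thesis using fb[OF that] by simp
  qed
  have uc: "uniformly_continuous_on S f"
    unfolding uniformly_continuous_on_def
  proof (intro allI impI)
    fix e :: real assume e: "e > 0"
    show "\<exists>d>0. \<forall>x\<in>S. \<forall>x'\<in>S. dist x' x < d \<longrightarrow> dist (f x') (f x) < e"
    proof (intro exI[of _ "e / K'"] conjI ballI impI)
      show "e / K' > 0" using e K'pos by simp
      fix x x' assume xs: "x \<in> S" "x' \<in> S" and d: "dist x' x < e / K'"
      have "dist (f x') (f x) = cmod (f (x' - x))" by (simp add: dist_norm fdiff xs)
      also have "\<dots> \<le> K' * norm (x' - x)" by (rule fb'[OF Sdiff[OF xs(2) xs(1)]])
      also have "\<dots> < K' * (e / K')" using mult_strict_left_mono[OF d[unfolded dist_norm] K'pos] .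
      also have "\<dots> = e" using K'pos by simp
      finally show "dist (f x') (f x) < e" .
    qed
  qed
  obtain g where g1: "uniformly_continuous_on (closure S) g" and g2: "\<And>x. x \<in> S \<Longrightarrow> f x = g x"
    using uniformly_continuous_on_extension_on_closure[OF uc] by metis
  have gc: "continuous_on UNIV g" using g1 dense uniformly_continuous_imp_continuous by metis
  have gadd: "g (a + b) = g a + g b" for a b
  proof -
    have cl: "closed {p. g (fst p + snd p) = g (fst p) + g (snd p)}"
    proof (intro closed_Collect_eq)
      show "continuous_on UNIV (\<lambda>p. g (fst p + snd p))"
        by (rule continuous_on_compose2[OF gc]) (auto intro!: continuous_on_add continuous_on_fst continuous_on_snd continuous_on_id)
      show "continuous_on UNIV (\<lambda>p. g (fst p) + g (snd p))"
        by (intro continuous_on_add; rule continuous_on_compose2[OF gc]) (auto intro: continuous_intros)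
    qed
    have "S \<times> S \<subseteq> {p. g (fst p + snd p) = g (fst p) + g (snd p)}"
      using g2 fadd Sadd by auto
    then have cs: "closure (S \<times> S) \<subseteq> {p. g (fst p + snd p) = g (fst p) + g (snd p)}"
      using cl by (rule closure_minimal)
    have "(a,b) \<in> closure (S \<times> S)" using dense by (simp add: closure_Times)
    then show ?thesis using cs by auto
  qed
  have gsc: "g (scaleC c a) = cnj c * g a" for c a
  proof -
    have cl: "closed {a. g (scaleC c a) = cnj c * g a}"
    proof (intro closed_Collect_eq)
      show "continuous_on UNIV (\<lambda>a. g (scaleC c a))"
        by (rule continuous_on_compose2[OF gc]) (auto intro: linear_continuous_on bounded_linear_scaleC)
      show "continuous_on UNIV (\<lambda>a. cnj c * g a)"
        by (intro continuous_on_mult continuous_on_const gc)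
    qed
    have "S \<subseteq> {a. g (scaleC c a) = cnj c * g a}" using g2 fsc Ssc by auto
    then have "closure S \<subseteq> {a. g (scaleC c a) = cnj c * g a}" using cl by (rule closure_minimal)
    then show ?thesis using dense by auto
  qed
  have gb: "cmod (g a) \<le> K' * norm a" for a
  proof -
    have cl: "closed {a. cmod (g a) \<le> K' * norm a}"
      by (intro closed_Collect_le continuous_intros continuous_on_norm gc)
    have "S \<subseteq> {a. cmod (g a) \<le> K' * norm a}" using g2 fb' by auto
    then have "closure S \<subseteq> {a. cmod (g a) \<le> K' * norm a}" using cl by (rule closure_minimal)
    then show ?thesis using dense by auto
  qed
  have "g \<in> cdual" by (rule cdualI[OF gadd gsc gb])
  then show ?thesis using g2 by metis
qed



context ipsp begin

lemma norm_diff_sq: "(norm (a - b))\<^sup>2 = (norm a)\<^sup>2 + (norm b)\<^sup>2 - 2 * Re (ip a b)"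
  using norm_add_sq[of a "-b"] by (simp add: minus_r)

lemma riesz:
  fixes D :: "'b set" and g :: "'b \<Rightarrow> 'h" and f :: "'b \<Rightarrow> complex"
    and pl :: "'b \<Rightarrow> 'b \<Rightarrow> 'b" and sc :: "complex \<Rightarrow> 'b \<Rightarrow> 'b"
  assumes D0: "u0 \<in> D"
    and Dadd: "\<And>u v. u \<in> D \<Longrightarrow> v \<in> D \<Longrightarrow> pl u v \<in> D"
    and Dsc: "\<And>c u. u \<in> D \<Longrightarrow> sc c u \<in> D"
    and gadd: "\<And>u v. u \<in> D \<Longrightarrow> v \<in> D \<Longrightarrow> g (pl u v) = g u + g v"
    and gsc: "\<And>c u. u \<in> D \<Longrightarrow> g (sc c u) = scaleC c (g u)"
    and fadd: "\<And>u v. u \<in> D \<Longrightarrow> v \<in> D \<Longrightarrow> f (pl u v) = f u + f v"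
    and fsc: "\<And>c u. u \<in> D \<Longrightarrow> f (sc c u) = c * f u"
    and bd: "\<And>u. u \<in> D \<Longrightarrow> cmod (f u) \<le> K * norm (g u)"
  shows "\<exists>w. \<forall>u\<in>D. ip (g u) w = f u"
proof -
  define F where "F u = (norm (g u))\<^sup>2 - 2 * Re (f u)" for u
  have Flow: "- (K\<^sup>2) \<le> F u" if "u \<in> D" for u
  proof -
    have "Re (f u) \<le> K * norm (g u)" using bd[OF that] complex_Re_le_cmod[of "f u"] by linarith
    moreover have "0 \<le> (norm (g u) - K)\<^sup>2" by simp
    ultimately show ?thesis unfolding F_def by (simp add: power2_diff algebra_simps)
  qed
  define m where "m = Inf (F ` D)"
  have bdd: "bdd_below (F ` D)" using Flow by (auto intro!: bdd_belowI[of _ "- (K\<^sup>2)"])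
  have mle: "m \<le> F u" if "u \<in> D" for u unfolding m_def using bdd that by (simp add: cInf_lower)
  have ex: "\<exists>u\<in>D. F u < m + inverse (real (Suc n))" for n
  proof -
    have "F ` D \<noteq> {}" using D0 by auto
    moreover have "Inf (F ` D) < m + inverse (real (Suc n))" unfolding m_def by simp
    ultimately obtain x where "x \<in> F ` D" "x < m + inverse (real (Suc n))"
      using cInf_lessD[of "F ` D" "m + inverse (real (Suc n))"] by blast
    then show ?thesis by auto
  qed
  then have "\<forall>n. \<exists>u. u \<in> D \<and> F u < m + inverse (real (Suc n))" by blast
  then obtain us where "\<forall>n. us n \<in> D \<and> F (us n) < m + inverse (real (Suc n))"
    using choice[of "\<lambda>n u. u \<in> D \<and> F u < m + inverse (real (Suc n))"] by blast
  then have us: "\<And>n. us n \<in> D" and usF: "\<And>n. F (us n) < m + inverse (real (Suc n))" by auto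
  define h where "h n = g (us n)" for n
  have mid: "(norm (g u - g v))\<^sup>2 \<le> 2 * (F u - m) + 2 * (F v - m)" if "u \<in> D" "v \<in> D" for u v
  proof -
    define w where "w = sc (1/2) (pl u v)"
    have wD: "w \<in> D" unfolding w_def using that by (intro Dsc Dadd)
    have gw: "g w = scaleC (1/2) (g u + g v)"
      unfolding w_def using that by (simp add: gsc gadd Dadd)
    have fw: "f w = (1/2) * (f u + f v)"
      unfolding w_def using that by (simp add: fsc fadd Dadd)
    have h1: "4 * (norm (g w))\<^sup>2 = (norm (g u + g v))\<^sup>2"
      by (simp add: gw norm_scaleC power_divide)
    have h2: "(norm (g u + g v))\<^sup>2 + (norm (g u - g v))\<^sup>2 = 2 * (norm (g u))\<^sup>2 + 2 * (norm (g v))\<^sup>2"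
      by (simp add: norm_add_sq norm_diff_sq)
    have "m \<le> (norm (g w))\<^sup>2 - 2 * Re (f w)" using mle[OF wD] by (simp add: F_def)
    moreover have "2 * Re (f w) = Re (f u) + Re (f v)" unfolding fw by simp
    ultimately have h3: "m + Re (f u) + Re (f v) \<le> (norm (g w))\<^sup>2" by linarith
    have G: "(norm (g u - g v))\<^sup>2 \<le> 2 * (norm (g u))\<^sup>2 + 2 * (norm (g v))\<^sup>2 - 4 * Re (f u) - 4 * Re (f v) - 4 * m"
      using h1 h2 h3 by linarith
    have "2 * (F u - m) + 2 * (F v - m) = 2 * (norm (g u))\<^sup>2 + 2 * (norm (g v))\<^sup>2 - 4 * Re (f u) - 4 * Re (f v) - 4 * m"
      unfolding F_def by (simp add: algebra_simps)
    then show ?thesis using G by simp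
  qed
  have hC: "Cauchy h"
    unfolding Cauchy_def
  proof (intro allI impI)
    fix e :: real assume e: "e > 0"
    obtain M where M: "inverse (real (Suc M)) < e\<^sup>2 / 4" using reals_Archimedean[of "e\<^sup>2/4"] e by auto
    have "\<forall>n\<ge>M. \<forall>k\<ge>M. dist (h n) (h k) < e"
    proof (intro allI impI)
      fix n k assume nk: "n \<ge> M" "k \<ge> M"
      have iv: "inverse (real (Suc j)) \<le> inverse (real (Suc M))" if "j \<ge> M" for j
        using that by (simp add: le_imp_inverse_le)
      have "(dist (h n) (h k))\<^sup>2 = (norm (g (us n) - g (us k)))\<^sup>2" by (simp add: h_def dist_norm)
      also have "\<dots> \<le> 2 * (F (us n) - m) + 2 * (F (us k) - m)" by (rule mid[OF us us])
      also have "\<dots> < 2 * inverse (real (Suc M)) + 2 * inverse (real (Suc M)) + 0"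
        using usF[of n] usF[of k] iv[OF nk(1)] iv[OF nk(2)] by (smt (verit))
      also have "\<dots> < e\<^sup>2" using M by simp
      finally have "(dist (h n) (h k))\<^sup>2 < e\<^sup>2" .
      then show "dist (h n) (h k) < e" using e by (simp add: power_less_imp_less_base)
    qed
    then show "\<exists>M. \<forall>n\<ge>M. \<forall>k\<ge>M. dist (h n) (h k) < e" by blast
  qed
  then obtain w where hw: "h \<longlonglongrightarrow> w" using Cauchy_convergent_iff convergent_def by blast
  have Fm: "(\<lambda>n. F (us n)) \<longlonglongrightarrow> m"
  proof (rule tendsto_sandwich[of "\<lambda>n. m" _ _ "\<lambda>n. m + inverse (real (Suc n))"])
    show "\<forall>\<^sub>F n in sequentially. m \<le> F (us n)" using mle[OF us] by simp
    show "\<forall>\<^sub>F n in sequentially. F (us n) \<le> m + inverse (real (Suc n))" by (intro always_eventually allI less_imp_le usF)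
    show "(\<lambda>n. m) \<longlonglongrightarrow> m" by simp
    show "(\<lambda>n. m + inverse (real (Suc n))) \<longlonglongrightarrow> m"
      using tendsto_add[OF tendsto_const LIMSEQ_inverse_real_of_nat, of m] by simp
  qed
  show ?thesis
  proof (intro exI ballI)
    fix u assume uD: "u \<in> D"
    define d where "d = f u - ip (g u) w"
    have "2 * Re (t * d) \<le> (cmod t)\<^sup>2 * (norm (g u))\<^sup>2" for t
    proof -
      have le: "m \<le> (norm (h n + scaleC t (g u)))\<^sup>2 + F (us n) - (norm (h n))\<^sup>2 - 2 * Re (t * f u)" for n
      proof -
        have "m \<le> F (pl (us n) (sc t u))" by (intro mle Dadd Dsc us uD)
        also have "\<dots> = (norm (h n + scaleC t (g u)))\<^sup>2 + F (us n) - (norm (h n))\<^sup>2 - 2 * Re (t * f u)"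
          unfolding F_def h_def using us uD by (simp add: gadd gsc fadd fsc Dsc)
        finally show ?thesis .
      qed
      have lim: "(\<lambda>n. (norm (h n + scaleC t (g u)))\<^sup>2 + F (us n) - (norm (h n))\<^sup>2 - 2 * Re (t * f u))
          \<longlonglongrightarrow> (norm (w + scaleC t (g u)))\<^sup>2 + m - (norm w)\<^sup>2 - 2 * Re (t * f u)"
        by (intro tendsto_intros hw Fm)
      have "m \<le> (norm (w + scaleC t (g u)))\<^sup>2 + m - (norm w)\<^sup>2 - 2 * Re (t * f u)"
        by (rule LIMSEQ_le_const[OF lim]) (use le in auto)
      then have "2 * Re (t * f u) \<le> (norm (w + scaleC t (g u)))\<^sup>2 - (norm w)\<^sup>2" by simp
      also have "\<dots> = (cmod t)\<^sup>2 * (norm (g u))\<^sup>2 + 2 * Re (t * ip (g u) w)"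
      proof -
        have "ip w (scaleC t (g u)) = cnj t * cnj (ip (g u) w)" by (simp add: scale_r sym[of w "g u"])
        then have "Re (ip w (scaleC t (g u))) = Re (t * ip (g u) w)"
          by (metis complex_cnj_mult cnj.simps(1))
        then show ?thesis by (simp add: norm_add_sq norm_scaleC power_mult_distrib)
      qed
      finally show ?thesis by (simp add: d_def algebra_simps)
    qed
    then have "d = 0" by (intro quad_zero[of "(norm (g u))\<^sup>2"]) auto
    then show "ip (g u) w = f u" by (simp add: d_def)
  qed
qed

end


locale energy = ipsp ip for ip :: "'h::{cnormed_vector,banach} \<Rightarrow> 'h \<Rightarrow> complex" +
  fixes D :: "'a::{cnormed_vector,banach} set" and A :: "'a \<Rightarrow> 'a \<Rightarrow> complex"
    and \<iota> :: "('a \<Rightarrow> complex) \<Rightarrow> 'h" and E :: "'a \<Rightarrow> 'a"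
  assumes op: "is_op D A" and ec: "energy_completion D A ip \<iota>"
    and E_lin: "bounded_linear E" and E_C: "\<forall>c x. E (scaleC c x) = scaleC c (E x)"
    and EA: "\<forall>x\<in>D. E x \<in> D \<and> dual_op E (A x) = A (E x)"
begin

lemma D0: "0 \<in> D" using op unfolding is_op_def by blast
lemma Dadd: "x \<in> D \<Longrightarrow> y \<in> D \<Longrightarrow> x + y \<in> D" using op unfolding is_op_def by blast
lemma Dsc: "x \<in> D \<Longrightarrow> scaleC c x \<in> D" using op unfolding is_op_def by blast
lemma Acd: "x \<in> D \<Longrightarrow> A x \<in> cdual" using op unfolding is_op_def by blast
lemma Aadd: "x \<in> D \<Longrightarrow> y \<in> D \<Longrightarrow> A (x + y) = (\<lambda>z. A x z + A y z)" using op unfolding is_op_def by blast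
lemma Asc: "x \<in> D \<Longrightarrow> A (scaleC c x) = (\<lambda>z. c * A x z)" using op unfolding is_op_def by blast
lemma Ddiff: "x \<in> D \<Longrightarrow> y \<in> D \<Longrightarrow> x - y \<in> D"
  using Dadd[of x "scaleC (-1) y"] Dsc[of y "-1"] by (simp add: scaleC_minus_one)

lemma iadd: "x \<in> D \<Longrightarrow> y \<in> D \<Longrightarrow> \<iota> (A (x + y)) = \<iota> (A x) + \<iota> (A y)"
  using ec unfolding energy_completion_def by (simp add: Aadd)
lemma isc: "x \<in> D \<Longrightarrow> \<iota> (A (scaleC c x)) = scaleC c (\<iota> (A x))"
  using ec unfolding energy_completion_def by (simp add: Asc)
lemma idiff: "x \<in> D \<Longrightarrow> y \<in> D \<Longrightarrow> \<iota> (A (x - y)) = \<iota> (A x) - \<iota> (A y)"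
proof -
  assume xy: "x \<in> D" "y \<in> D"
  have "\<iota> (A (x - y)) = \<iota> (A (x + scaleC (-1) y))" by (simp add: scaleC_minus_one)
  also have "\<dots> = \<iota> (A x) + scaleC (-1) (\<iota> (A y))" using xy by (simp add: iadd isc Dsc)
  finally show ?thesis by (simp add: scaleC_minus_one)
qed
lemma iip: "x \<in> D \<Longrightarrow> y \<in> D \<Longrightarrow> ip (\<iota> (A x)) (\<iota> (A y)) = A x y"
  using ec unfolding energy_completion_def by blast
lemma idense: "closure (\<iota> ` A ` D) = UNIV"
  using ec unfolding energy_completion_def by blast

lemma ED: "x \<in> D \<Longrightarrow> E x \<in> D" using EA by blast
lemma EAx: "x \<in> D \<Longrightarrow> A x (E z) = A (E x) z"
proof -
  assume "x \<in> D"
  then have "dual_op E (A x) = A (E x)" using EA by blast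
  then show ?thesis unfolding dual_op_def by metis
qed

lemma Ebound: "\<exists>N>0. \<forall>x. norm (E x) \<le> N * norm x"
  using bounded_linear.pos_bounded[OF E_lin] by (metis mult.commute)

abbreviation "J \<equiv> Jstar D A ip \<iota>"
abbreviation "SD \<equiv> Jstar_dom D A \<iota>"

lemma J_exists: "y \<in> SD \<Longrightarrow> \<exists>w. \<forall>u\<in>D. ip (\<iota> (A u)) w = A u y"
proof -
  assume "y \<in> SD"
  then obtain K where K: "\<forall>x\<in>D. cmod (A x y) \<le> K * norm (\<iota> (A x))" unfolding Jstar_dom_def by blast
  show ?thesis
    by (rule riesz[where D=D and g="\<lambda>u. \<iota> (A u)" and f="\<lambda>u. A u y" and pl="(+)" and sc=scaleC and K=K])
       (use D0 Dadd Dsc iadd isc K in \<open>auto simp: Aadd Asc\<close>)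
qed

lemma J_uniq: "\<forall>u\<in>D. ip (\<iota> (A u)) w1 = A u y \<Longrightarrow> \<forall>u\<in>D. ip (\<iota> (A u)) w2 = A u y \<Longrightarrow> w1 = w2"
  by (rule dense_unique[OF idense]) auto

lemma J_spec: "y \<in> SD \<Longrightarrow> \<forall>u\<in>D. ip (\<iota> (A u)) (J y) = A u y"
proof -
  assume "y \<in> SD"
  then obtain w where w: "\<forall>u\<in>D. ip (\<iota> (A u)) w = A u y" using J_exists by blast
  have "J y = w" unfolding Jstar_def
    by (rule the_equality) (use w J_uniq in auto)
  then show ?thesis using w by simp
qed

lemma J_eq: "y \<in> SD \<Longrightarrow> \<forall>u\<in>D. ip (\<iota> (A u)) w = A u y \<Longrightarrow> J y = w"
  using J_spec J_uniq by blast

lemma SD_add: "y1 \<in> SD \<Longrightarrow> y2 \<in> SD \<Longrightarrow> y1 + y2 \<in> SD"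
proof -
  assume a: "y1 \<in> SD" "y2 \<in> SD"
  obtain K1 where K1: "\<forall>x\<in>D. cmod (A x y1) \<le> K1 * norm (\<iota> (A x))" using a(1) unfolding Jstar_dom_def by blast
  obtain K2 where K2: "\<forall>x\<in>D. cmod (A x y2) \<le> K2 * norm (\<iota> (A x))" using a(2) unfolding Jstar_dom_def by blast
  have "cmod (A x (y1 + y2)) \<le> (K1 + K2) * norm (\<iota> (A x))" if "x \<in> D" for x
  proof -
    have "cmod (A x (y1 + y2)) = cmod (A x y1 + A x y2)" using that by (simp add: cdual_add Acd)
    also have "\<dots> \<le> cmod (A x y1) + cmod (A x y2)" by (rule norm_triangle_ineq)
    also have "\<dots> \<le> K1 * norm (\<iota> (A x)) + K2 * norm (\<iota> (A x))" using K1 K2 that by (meson add_mono)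
    finally show ?thesis by (simp add: algebra_simps)
  qed
  then show ?thesis unfolding Jstar_dom_def by blast
qed

lemma SD_sc: "y \<in> SD \<Longrightarrow> scaleC c y \<in> SD"
proof -
  assume a: "y \<in> SD"
  obtain K where K: "\<forall>x\<in>D. cmod (A x y) \<le> K * norm (\<iota> (A x))" using a unfolding Jstar_dom_def by blast
  have "cmod (A x (scaleC c y)) \<le> (cmod c * K) * norm (\<iota> (A x))" if "x \<in> D" for x
  proof -
    have "cmod (A x (scaleC c y)) = cmod c * cmod (A x y)" using that by (simp add: cdual_scale Acd norm_mult)
    also have "\<dots> \<le> cmod c * (K * norm (\<iota> (A x)))" using K that by (simp add: mult_left_mono)
    finally show ?thesis by (simp add: mult_ac)
  qed
  then show ?thesis unfolding Jstar_dom_def by blast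
qed

lemma SD0: "0 \<in> SD"
  unfolding Jstar_dom_def by (auto intro!: exI[of _ 0] simp: cdual_zero[OF Acd])

lemma J_add: "y1 \<in> SD \<Longrightarrow> y2 \<in> SD \<Longrightarrow> J (y1 + y2) = J y1 + J y2"
  by (rule J_eq) (auto simp: SD_add add_r J_spec cdual_add Acd)

lemma J_sc: "y \<in> SD \<Longrightarrow> J (scaleC c y) = scaleC c (J y)"
  by (rule J_eq) (auto simp: SD_sc scale_r J_spec cdual_scale Acd)

end


lemma cauchy_lip:
  fixes a :: "nat \<Rightarrow> 'x::metric_space" and b :: "nat \<Rightarrow> 'y::metric_space"
  assumes "Cauchy a" "\<And>n k. dist (b n) (b k) \<le> N * dist (a n) (a k)" "N > 0"
  shows "Cauchy b"
  unfolding Cauchy_def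
proof (intro allI impI)
  fix e :: real assume e: "e > 0"
  then have "e / N > 0" using assms(3) by simp
  then obtain M where M: "\<forall>m\<ge>M. \<forall>n\<ge>M. dist (a m) (a n) < e / N"
    using assms(1) unfolding Cauchy_def by blast
  have "dist (b m) (b n) < e" if "m \<ge> M" "n \<ge> M" for m n
  proof -
    have "dist (b m) (b n) \<le> N * dist (a m) (a n)" by (rule assms(2))
    also have "\<dots> < N * (e / N)" using M that by (intro mult_strict_left_mono assms(3)) auto
    also have "\<dots> = e" using assms(3) by simp
    finally show ?thesis .
  qed
  then show "\<exists>M. \<forall>m\<ge>M. \<forall>n\<ge>M. dist (b m) (b n) < e" by blast
qed

context energy begin

lemma Ediff: "E (a - b) = E a - E b"
  by (rule linear_diff[OF bounded_linear.linear[OF E_lin]])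

lemma energy_bound: "\<exists>N>0. \<forall>u\<in>D. norm (\<iota> (A (E u))) \<le> N * norm (\<iota> (A u))"
proof -
  obtain N where N: "N > 0" "\<And>x. norm (E x) \<le> N * norm x" using Ebound by blast
  have "norm (\<iota> (A (E u))) \<le> N * norm (\<iota> (A u))" if uD: "u \<in> D" for u
  proof -
    have EkD: "(E ^^ k) u \<in> D" for k by (induction k) (auto simp: uD ED)
    have EkA: "A ((E ^^ k) u) z = A u ((E ^^ k) z)" for k z
    proof (induction k arbitrary: z)
      case 0 then show ?case by simp
    next
      case (Suc k)
      have "A ((E ^^ Suc k) u) z = A (E ((E ^^ k) u)) z" by simp
      also have "\<dots> = A ((E ^^ k) u) (E z)" by (rule EAx[OF EkD, symmetric])
      also have "\<dots> = A u ((E ^^ k) (E z))" by (rule Suc)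
      also have "\<dots> = A u ((E ^^ Suc k) z)" by (simp add: funpow_swap1)
      finally show ?case .
    qed
    have Ekn: "norm ((E ^^ k) z) \<le> N ^ k * norm z" for k z
    proof (induction k)
      case 0 then show ?case by simp
    next
      case (Suc k)
      have "norm ((E ^^ Suc k) z) = norm (E ((E ^^ k) z))" by simp
      also have "\<dots> \<le> N * norm ((E ^^ k) z)" by (rule N(2))
      also have "\<dots> \<le> N * (N ^ k * norm z)" using Suc N(1) by (simp add: mult_left_mono)
      finally show ?case by (simp add: mult_ac)
    qed
    obtain Ku where Ku: "\<forall>x. cmod (A u x) \<le> Ku * norm x" using cdual_bound[OF Acd[OF uD]] by blast
    define Ku' where "Ku' = max Ku 0"
    have Ku': "cmod (A u x) \<le> Ku' * norm x" for x
    proof -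
      have "Ku * norm x \<le> Ku' * norm x" by (intro mult_right_mono) (auto simp: Ku'_def)
      then show ?thesis using Ku by (meson order_trans)
    qed
    have Ku'0: "Ku' \<ge> 0" by (simp add: Ku'_def)
    define e where "e k = norm (\<iota> (A ((E ^^ k) u)))" for k
    have sq: "complex_of_real ((norm (\<iota> (A v)))\<^sup>2) = A v v" if "v \<in> D" for v
      using iip[OF that that] self by simp
    have "(e k)\<^sup>2 \<le> (Ku' * norm u) * N ^ (2 * k)" for k
    proof -
      have "(e k)\<^sup>2 = Re (A ((E ^^ k) u) ((E ^^ k) u))" unfolding e_def using sq[OF EkD] by (metis Re_complex_of_real)
      also have "\<dots> \<le> cmod (A ((E ^^ k) u) ((E ^^ k) u))" by (rule complex_Re_le_cmod)
      also have "\<dots> = cmod (A u ((E ^^ (k + k)) u))" by (simp add: EkA funpow_add)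
      also have "\<dots> \<le> Ku' * norm ((E ^^ (k + k)) u)" by (rule Ku')
      also have "\<dots> \<le> Ku' * (N ^ (k + k) * norm u)" using Ekn Ku'0 by (simp add: mult_left_mono)
      finally have fin: "(e k)\<^sup>2 \<le> Ku' * (N ^ (k + k) * norm u)" .
      have "N ^ (2 * k) = N ^ (k + k)" by (simp only: mult_2)
      then show ?thesis using fin by (simp only: mult.assoc mult.commute mult.left_commute)
    qed
    moreover have "(e (Suc k))\<^sup>2 \<le> e k * e (Suc (Suc k))" for k
    proof -
      define v where "v = (E ^^ k) u"
      have vD: "v \<in> D" unfolding v_def by (rule EkD)
      have "(e (Suc k))\<^sup>2 = Re (A (E v) (E v))" unfolding e_def v_def using sq[OF ED[OF EkD]] by (metis Re_complex_of_real funpow.simps(2) comp_apply)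
      also have "\<dots> \<le> cmod (A (E v) (E v))" by (rule complex_Re_le_cmod)
      also have "\<dots> = cmod (A v (E (E v)))" by (simp add: EAx[OF vD])
      also have "\<dots> = cmod (ip (\<iota> (A v)) (\<iota> (A (E (E v)))))" by (simp add: iip vD ED)
      also have "\<dots> \<le> norm (\<iota> (A v)) * norm (\<iota> (A (E (E v))))" by (rule CS)
      also have "\<dots> = e k * e (Suc (Suc k))" by (simp add: e_def v_def)
      finally show ?thesis .
    qed
    moreover have "\<And>k. 0 \<le> e k" by (simp add: e_def)
    ultimately have "e 1 \<le> N * e 0" using seq_growth[of e "Ku' * norm u" N] N(1) by blast
    then show ?thesis by (simp add: e_def)
  qed
  then show ?thesis using N(1) by blast
qed

lemma SD_E: "y \<in> SD \<Longrightarrow> E y \<in> SD"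
proof -
  assume y: "y \<in> SD"
  obtain N where N: "N > 0" "\<forall>u\<in>D. norm (\<iota> (A (E u))) \<le> N * norm (\<iota> (A u))" using energy_bound by blast
  have "cmod (A x (E y)) \<le> (N * norm (J y)) * norm (\<iota> (A x))" if x: "x \<in> D" for x
  proof -
    have "A x (E y) = ip (\<iota> (A (E x))) (J y)" using J_spec[OF y] ED[OF x] EAx[OF x] by simp
    then have "cmod (A x (E y)) \<le> norm (\<iota> (A (E x))) * norm (J y)" using CS by simp
    also have "\<dots> \<le> (N * norm (\<iota> (A x))) * norm (J y)" using N(2) x by (simp add: mult_right_mono)
    finally show ?thesis by (simp add: mult_ac)
  qed
  then show ?thesis unfolding Jstar_dom_def by blast
qed

lemma J_E_sym:
  assumes x: "x \<in> SD" and y: "y \<in> SD"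
  shows "ip (J (E x)) (J y) = ip (J x) (J (E y))"
proof -
  obtain N where N: "N > 0" "\<forall>u\<in>D. norm (\<iota> (A (E u))) \<le> N * norm (\<iota> (A u))" using energy_bound by blast
  have "J x \<in> closure (\<iota> ` A ` D)" using idense by simp
  then obtain s where s: "\<forall>n. s n \<in> \<iota> ` A ` D" "s \<longlonglongrightarrow> J x" unfolding closure_sequential by blast
  have "\<forall>n. \<exists>u. u \<in> D \<and> s n = \<iota> (A u)" using s(1) by blast
  then obtain us where "\<forall>n. us n \<in> D \<and> s n = \<iota> (A (us n))"
    using choice[of "\<lambda>n u. u \<in> D \<and> s n = \<iota> (A u)"] by blast
  then have us: "\<And>n. us n \<in> D" and sus: "\<And>n. s n = \<iota> (A (us n))" by auto
  define b where "b n = \<iota> (A (E (us n)))" for n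
  have "Cauchy b"
  proof (rule cauchy_lip[OF LIMSEQ_imp_Cauchy[OF s(2)] _ N(1)])
    fix n k
    have "dist (b n) (b k) = norm (\<iota> (A (E (us n - us k))))"
      unfolding b_def dist_norm using us ED
      by (simp add: idiff Ediff)
    also have "\<dots> \<le> N * norm (\<iota> (A (us n - us k)))" using N(2) Ddiff[OF us us] by blast
    also have "\<dots> = N * dist (s n) (s k)" by (simp add: sus dist_norm idiff us)
    finally show "dist (b n) (b k) \<le> N * dist (s n) (s k)" .
  qed
  then obtain w where bw: "b \<longlonglongrightarrow> w" using Cauchy_convergent_iff convergent_def by blast
  have wprop: "\<forall>v\<in>D. ip (\<iota> (A v)) w = A v (E x)"
  proof
    fix v assume vD: "v \<in> D"
    have l1: "(\<lambda>n. ip (\<iota> (A v)) (b n)) \<longlonglongrightarrow> ip (\<iota> (A v)) w"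
      by (rule bounded_linear.tendsto[OF bl_r bw])
    have l2: "(\<lambda>n. ip (\<iota> (A (E v))) (s n)) \<longlonglongrightarrow> ip (\<iota> (A (E v))) (J x)"
      by (rule bounded_linear.tendsto[OF bl_r s(2)])
    have eq: "ip (\<iota> (A v)) (b n) = ip (\<iota> (A (E v))) (s n)" for n
      unfolding b_def sus using vD us by (simp add: iip ED EAx)
    have "ip (\<iota> (A v)) w = ip (\<iota> (A (E v))) (J x)"
      using LIMSEQ_unique[OF l1 l2[folded eq]] .
    also have "\<dots> = A (E v) x" using J_spec[OF x] ED[OF vD] by simp
    also have "\<dots> = A v (E x)" using EAx[OF vD] by simp
    finally show "ip (\<iota> (A v)) w = A v (E x)" .
  qed
  have JEx: "J (E x) = w" by (rule J_eq[OF SD_E[OF x] wprop])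
  have l3: "(\<lambda>n. ip (s n) (J (E y))) \<longlonglongrightarrow> ip (J x) (J (E y))"
    by (rule bounded_linear.tendsto[OF bl_l s(2)])
  have l4: "(\<lambda>n. ip (b n) (J y)) \<longlonglongrightarrow> ip w (J y)"
    by (rule bounded_linear.tendsto[OF bl_l bw])
  have eq2: "ip (s n) (J (E y)) = ip (b n) (J y)" for n
  proof -
    have "ip (s n) (J (E y)) = A (us n) (E y)" using J_spec[OF SD_E[OF y]] us sus by simp
    also have "\<dots> = A (E (us n)) y" using EAx[OF us] by simp
    also have "\<dots> = ip (b n) (J y)" using J_spec[OF y] ED[OF us] by (simp add: b_def)
    finally show ?thesis .
  qed
  have "ip (J x) (J (E y)) = ip w (J y)" using LIMSEQ_unique[OF l3[unfolded eq2] l4] .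
  then show ?thesis using JEx by simp
qed

end


theorem theorem5:
  fixes DA DB :: "'a::{cnormed_vector,banach} set"
    and A B :: "'a \<Rightarrow> 'a \<Rightarrow> complex"
    and ipA :: "'ha::{cnormed_vector,banach} \<Rightarrow> 'ha \<Rightarrow> complex"
    and \<iota>A :: "('a \<Rightarrow> complex) \<Rightarrow> 'ha"
    and ipB :: "'hb::{cnormed_vector,banach} \<Rightarrow> 'hb \<Rightarrow> complex"
    and \<iota>B :: "('a \<Rightarrow> complex) \<Rightarrow> 'hb"
    and E :: "'a \<Rightarrow> 'a"
  assumes refl: "reflexive_space TYPE('a)"
    and opA: "is_op DA A" and posA: "pos_op DA A" and lbA: "pos_lower_bound DA A"
    and saA: "self_adjoint_op DA A"
    and opB: "is_op DB B" and posB: "pos_op DB B" and lbB: "pos_lower_bound DB B"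
    and saB: "self_adjoint_op DB B"
    and HA: "energy_completion DA A ipA \<iota>A"
    and HB: "energy_completion DB B ipB \<iota>B"
    and dense: "closure (form_space DA A \<iota>A DB B \<iota>B) = UNIV"
    and E_lin: "bounded_linear E" and E_C: "\<forall>c x. E (scaleC c x) = scaleC c (E x)"
    and E_DA: "E ` DA \<subseteq> DA" and E_DB: "E ` DB \<subseteq> DB"
    and EA: "\<forall>x\<in>DA. E x \<in> DA \<and> dual_op E (A x) = A (E x)"
    and EB: "\<forall>x\<in>DB. E x \<in> DB \<and> dual_op E (B x) = B (E x)"
  shows "\<forall>x \<in> formsum_dom DA A ipA \<iota>A DB B ipB \<iota>B.
           E x \<in> formsum_dom DA A ipA \<iota>A DB B ipB \<iota>B
           \<and> dual_op E (formsum DA A ipA \<iota>A DB B ipB \<iota>B x) = formsum DA A ipA \<iota>A DB B ipB \<iota>B (E x)"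
proof -
  have isA: "is_ip ipA" using HA unfolding energy_completion_def by blast
  have isB: "is_ip ipB" using HB unfolding energy_completion_def by blast
  have enA: "energy ipA DA A \<iota>A E"
    unfolding energy_def energy_axioms_def ipsp_def using isA opA HA E_lin E_C EA by blast
  have enB: "energy ipB DB B \<iota>B E"
    unfolding energy_def energy_axioms_def ipsp_def using isB opB HB E_lin E_C EB by blast
  interpret IA: energy ipA DA A \<iota>A E by (rule enA)
  interpret IB: energy ipB DB B \<iota>B E by (rule enB)
  let ?FS = "form_space DA A \<iota>A DB B \<iota>B"
  let ?t = "form_t DA A ipA \<iota>A DB B ipB \<iota>B"
  have FS: "?FS = IA.SD \<inter> IB.SD" by (simp add: form_space_def)
  have tdef: "?t x y = ipA (IA.J x) (IA.J y) + ipB (IB.J x) (IB.J y)" for x y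
    by (simp add: form_t_def)
  have FS_E: "E y \<in> ?FS" if "y \<in> ?FS" for y using IA.SD_E IB.SD_E FS that by auto
  have t_E: "?t (E x) y = ?t x (E y)" if "x \<in> ?FS" "y \<in> ?FS" for x y
    using that by (simp add: tdef FS IA.J_E_sym IB.J_E_sym)
  obtain N where N: "N > 0" "\<And>x. norm (E x) \<le> N * norm x" using IA.Ebound by blast
  have Eadd: "E (a + b) = E a + E b" for a b
    by (rule linear_add[OF bounded_linear.linear[OF E_lin]])
  have FS0: "0 \<in> ?FS" using IA.SD0 IB.SD0 FS by auto
  have FSadd: "a + b \<in> ?FS" if "a \<in> ?FS" "b \<in> ?FS" for a b using IA.SD_add IB.SD_add FS that by auto
  have FSsc: "scaleC c a \<in> ?FS" if "a \<in> ?FS" for c a using IA.SD_sc IB.SD_sc FS that by auto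
  have tadd: "?t x (a + b) = ?t x a + ?t x b" if "a \<in> ?FS" "b \<in> ?FS" for x a b
    using that by (simp add: tdef FS IA.J_add IB.J_add IA.add_r IB.add_r)
  have tsc: "?t x (scaleC c a) = cnj c * ?t x a" if "a \<in> ?FS" for x c a
    using that by (simp add: tdef FS IA.J_sc IB.J_sc IA.scale_r IB.scale_r distrib_left)
  have fs_eq: "formsum DA A ipA \<iota>A DB B ipB \<iota>B x = z"
    if "z \<in> cdual" "\<forall>y\<in>?FS. z y = ?t x y" for x z
    unfolding formsum_def
  proof (rule the_equality)
    show "z \<in> cdual \<and> (\<forall>y\<in>?FS. z y = ?t x y)" using that by blast
    fix z' assume "z' \<in> cdual \<and> (\<forall>y\<in>?FS. z' y = ?t x y)"
    then show "z' = z" using that by (intro cdual_unique[OF _ _ dense]) auto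
  qed
  show ?thesis
  proof
    fix x assume xd: "x \<in> formsum_dom DA A ipA \<iota>A DB B ipB \<iota>B"
    then have xFS: "x \<in> ?FS" and "\<exists>K. \<forall>y\<in>?FS. cmod (?t x y) \<le> K * norm y"
      unfolding formsum_dom_def by auto
    then obtain K where K: "\<And>y. y \<in> ?FS \<Longrightarrow> cmod (?t x y) \<le> K * norm y" by blast
    have ExFS: "E x \<in> ?FS" by (rule FS_E[OF xFS])
    have bd: "cmod (?t (E x) y) \<le> (max K 0 * N) * norm y" if y: "y \<in> ?FS" for y
    proof -
      have "cmod (?t (E x) y) = cmod (?t x (E y))" using t_E[OF xFS y] by simp
      also have "\<dots> \<le> K * norm (E y)" by (rule K[OF FS_E[OF y]])
      also have "\<dots> \<le> max K 0 * norm (E y)" by (intro mult_right_mono) auto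
      also have "\<dots> \<le> max K 0 * (N * norm y)" by (intro mult_left_mono N(2)) auto
      finally show ?thesis by (simp add: mult_ac)
    qed
    have Exd: "E x \<in> formsum_dom DA A ipA \<iota>A DB B ipB \<iota>B"
      unfolding formsum_dom_def using ExFS bd by blast
    obtain z where z: "z \<in> cdual" "\<forall>y\<in>?FS. z y = ?t x y"
      using extension[of ?FS "?t x" K, OF FS0 FSadd FSsc tadd tsc K dense] by blast
    have fx: "formsum DA A ipA \<iota>A DB B ipB \<iota>B x = z" by (rule fs_eq[OF z])
    obtain Kz where Kz: "\<forall>v. cmod (z v) \<le> Kz * norm v" using cdual_bound[OF z(1)] by blast
    have dz: "dual_op E z \<in> cdual"
    proof (rule cdualI[where K="max Kz 0 * N"])
      fix a b c
      show "dual_op E z (a + b) = dual_op E z a + dual_op E z b"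
        by (simp add: dual_op_def Eadd cdual_add[OF z(1)])
      show "dual_op E z (scaleC c a) = cnj c * dual_op E z a"
        using E_C by (simp add: dual_op_def cdual_scale[OF z(1)])
      have "cmod (z (E a)) \<le> Kz * norm (E a)" using Kz by blast
      also have "\<dots> \<le> max Kz 0 * norm (E a)" by (intro mult_right_mono) auto
      also have "\<dots> \<le> max Kz 0 * (N * norm a)" by (intro mult_left_mono N(2)) auto
      finally show "cmod (dual_op E z a) \<le> max Kz 0 * N * norm a" by (simp add: dual_op_def mult_ac)
    qed
    have "\<forall>y\<in>?FS. dual_op E z y = ?t (E x) y"
    proof
      fix y assume y: "y \<in> ?FS"
      have "dual_op E z y = z (E y)" by (simp add: dual_op_def)
      also have "\<dots> = ?t x (E y)" using z(2) FS_E[OF y] by blast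
      also have "\<dots> = ?t (E x) y" using t_E[OF xFS y] by simp
      finally show "dual_op E z y = ?t (E x) y" .
    qed
    then have fEx: "formsum DA A ipA \<iota>A DB B ipB \<iota>B (E x) = dual_op E z" by (rule fs_eq[OF dz])
    show "E x \<in> formsum_dom DA A ipA \<iota>A DB B ipB \<iota>B \<and>
          dual_op E (formsum DA A ipA \<iota>A DB B ipB \<iota>B x) = formsum DA A ipA \<iota>A DB B ipB \<iota>B (E x)"
      using Exd fx fEx by simp
  qed
qed


end
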